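(* Let $\chi:\mathbb{R}_+\to\mathbb{R}$ be a Lipschitz function. The function $X:\mathcal Q_2(\mathbb{R}_+)\to\mathbb{R}$, $X(\mathsf q)=\int_0^1\chi(\mathsf q(u))\,\mathrm du$, is $\mathcal Q_2(\mathbb{R}_+)^*$-nondecreasing if and only if $\chi$ is nondecreasing and convex.
   Context: $\mathcal Q_2(\mathbb{R}_+)$ is the set of nondecreasing, right-continuous (with left limits) functions $\mathsf q:[0,1)\to\mathbb{R}_+$ that belong to $L^2([0,1),\mathbb{R})$. Its dual cone is $\mathcal Q_2(\mathbb{R}_+)^*=\{\mathsf p\in L^2([0,1),\mathbb{R}):\langle\mathsf p,\mathsf q\rangle_{L^2}\ge0$ for all $\mathsf q\in\mathcal Q_2(\mathbb{R}_+)\}$. A function $\mathsf g:\mathcal Q_2(\mathbb{R}_+)\to\mathbb{R}$ is $\mathcal Q_2(\mathbb{R}_+)^*$-nondecreasing if $\mathsf g(\mathsf q)\le\mathsf g(\mathsf q')$ whenever $\mathsf q,\mathsf q'\in\mathcal Q_2(\mathbb{R}_+)$ and $\mathsf q'-\mathsf q\in\mathcal Q_2(\mathbb{R}_+)^*$. *)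

theory Defs
  imports "HOL-Analysis.Analysis"
begin

text \<open>Functions on [0,1) are represented as real => real; only values on [0,1) matter.\<close>

definition L2_01 :: "(real \<Rightarrow> real) \<Rightarrow> bool" where
  "L2_01 f \<longleftrightarrow> set_borel_measurable lebesgue {0..<1} f
      \<and> set_integrable lebesgue {0..<1} (\<lambda>u. (f u)\<^sup>2)"

definition L2_inner :: "(real \<Rightarrow> real) \<Rightarrow> (real \<Rightarrow> real) \<Rightarrow> real" where
  "L2_inner p q = (LINT u:{0..<1}|lebesgue. p u * q u)"

text \<open>Q_2(R_+): nondecreasing, right-continuous, nonnegative, square-integrable on [0,1).
  Left limits exist automatically for nondecreasing functions.\<close>
definition Q2 :: "(real \<Rightarrow> real) set" where
  "Q2 = {q. (\<forall>u\<in>{0..<1}. 0 \<le> q u)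
          \<and> mono_on {0..<1} q
          \<and> (\<forall>u\<in>{0..<1}. continuous (at_right u) q)
          \<and> L2_01 q}"

definition Q2_dual :: "(real \<Rightarrow> real) set" where
  "Q2_dual = {p. L2_01 p \<and> (\<forall>q\<in>Q2. 0 \<le> L2_inner p q)}"

definition Q2_dual_nondecreasing :: "((real \<Rightarrow> real) \<Rightarrow> real) \<Rightarrow> bool" where
  "Q2_dual_nondecreasing g \<longleftrightarrow>
     (\<forall>q\<in>Q2. \<forall>q'\<in>Q2. (\<lambda>u. q' u - q u) \<in> Q2_dual \<longrightarrow> g q \<le> g q')"

end

theory Submission
  imports Defs
begin

lemma A_sets[simp]: "{0..<1::real} \<in> sets lebesgue" by simp

lemma sbm_comp:
  fixes f g :: "real \<Rightarrow> real"
  assumes "set_borel_measurable lebesgue A f" "A \<in> sets lebesgue" "continuous_on UNIV g"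
  shows "set_borel_measurable lebesgue A (\<lambda>u. g (f u))"
proof -
  have eq: "(\<lambda>u. indicator A u *\<^sub>R g (f u)) = (\<lambda>u. indicator A u * g (indicator A u *\<^sub>R f u))"
    by (auto simp: indicator_def fun_eq_iff)
  have m1: "(\<lambda>u. g (indicator A u *\<^sub>R f u)) \<in> borel_measurable lebesgue"
    using borel_measurable_continuous_on[OF assms(3) assms(1)[unfolded set_borel_measurable_def]] .
  have m2: "indicator A \<in> borel_measurable lebesgue" using assms(2) by simp
  show ?thesis unfolding set_borel_measurable_def eq by (rule borel_measurable_times[OF m2 m1])
qed

lemma sbm_mult:
  fixes f g :: "real \<Rightarrow> real"
  assumes "set_borel_measurable lebesgue A f" "set_borel_measurable lebesgue A g"
  shows "set_borel_measurable lebesgue A (\<lambda>u. f u * g u :: real)"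
proof -
  have eq: "(\<lambda>u. indicator A u *\<^sub>R (f u * g u)) = (\<lambda>u. (indicator A u *\<^sub>R f u) * (indicator A u *\<^sub>R g u))"
    by (auto simp: indicator_def fun_eq_iff)
  show ?thesis using assms unfolding set_borel_measurable_def eq by simp
qed

lemma sbm_cong:
  fixes f g :: "real \<Rightarrow> real"
  assumes "set_borel_measurable lebesgue A f" "\<And>u. u \<in> A \<Longrightarrow> f u = g u"
  shows "set_borel_measurable lebesgue A g"
proof -
  have eq: "(\<lambda>u. indicator A u *\<^sub>R g u) = (\<lambda>u. indicator A u *\<^sub>R f u)"
    using assms(2) by (auto simp: indicator_def fun_eq_iff)
  show ?thesis using assms(1) unfolding set_borel_measurable_def eq .
qed

lemma sbm_global:
  fixes f :: "real \<Rightarrow> real"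
  assumes "f \<in> borel_measurable lebesgue" "A \<in> sets lebesgue"
  shows "set_borel_measurable lebesgue A f"
  unfolding set_borel_measurable_def using assms
  by (intro borel_measurable_scaleR borel_measurable_indicator) auto

lemma si_const: "set_integrable lebesgue {0..<1::real} (\<lambda>u. c::real)"
proof -
  have "integrable lebesgue (\<lambda>u. c * indicator {0..<1::real} u)"
    by (intro integrable_mult_right integrable_real_indicator) auto
  then show ?thesis unfolding set_integrable_def by (simp add: mult.commute)
qed

lemma int_const: "(LINT u:{0..<1::real}|lebesgue. c) = (c::real)"
proof -
  have "(LINT u:{0..<1::real}|lebesgue. c) = integral\<^sup>L lebesgue (\<lambda>u. c * indicator {0..<1::real} u)"
    unfolding set_lebesgue_integral_def by (simp add: mult.commute)
  also have "\<dots> = c" by simp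
  finally show ?thesis .
qed

lemma L2_bounded:
  assumes "set_borel_measurable lebesgue {0..<1} f" "\<And>u. u \<in> {0..<1} \<Longrightarrow> \<bar>f u\<bar> \<le> B"
  shows "L2_01 f"
  unfolding L2_01_def
proof
  show "set_borel_measurable lebesgue {0..<1} f" by fact
  have m: "set_borel_measurable lebesgue {0..<1} (\<lambda>u. (f u)\<^sup>2)"
    using sbm_mult[OF assms(1) assms(1)] by (simp add: power2_eq_square)
  show "set_integrable lebesgue {0..<1} (\<lambda>u. (f u)\<^sup>2)"
  proof (rule set_integrable_bound[OF si_const[of "B^2"] m])
    show "AE x\<in>{0..<1} in lebesgue. norm ((f x)\<^sup>2) \<le> norm (B\<^sup>2)"
    proof (rule AE_I2, rule impI)
      fix x assume "x \<in> {0..<1::real}"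
      then have "\<bar>f x\<bar> \<le> B" by (rule assms(2))
      then show "norm ((f x)\<^sup>2) \<le> norm (B\<^sup>2)"
        by (metis abs_ge_zero power2_abs power_mono norm_power real_norm_def zero_le_power2 abs_of_nonneg order.trans)
    qed
  qed
qed

lemma L2_integrable:
  assumes "L2_01 f" shows "set_integrable lebesgue {0..<1} f"
proof -
  have i1: "set_integrable lebesgue {0..<1} (\<lambda>u. 1 + (f u)\<^sup>2)"
    using assms si_const[of 1] unfolding L2_01_def by (intro set_integral_add(1)) auto
  show ?thesis
  proof (rule set_integrable_bound[OF i1])
    show "set_borel_measurable lebesgue {0..<1} f" using assms unfolding L2_01_def by simp
    show "AE x\<in>{0..<1} in lebesgue. norm (f x) \<le> norm (1 + (f x)\<^sup>2)"
    proof (rule AE_I2, rule impI)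
      fix x :: real
      have "\<bar>f x\<bar> \<le> 1 + (f x)\<^sup>2"
      proof (cases "\<bar>f x\<bar> \<le> 1")
        case True then show ?thesis by (smt (verit) zero_le_power2)
      next
        case False
        then have "\<bar>f x\<bar> * 1 \<le> \<bar>f x\<bar> * \<bar>f x\<bar>" by (intro mult_left_mono) auto
        then show ?thesis by (simp add: power2_eq_square)
      qed
      then show "norm (f x) \<le> norm (1 + (f x)\<^sup>2)" by simp
    qed
  qed
qed

lemma step_int:
  fixes s a b :: real
  assumes "0 \<le> s" "s \<le> 1"
  shows "set_integrable lebesgue {0..<1} (\<lambda>u. if u < s then a else b)"
    and "(LINT u:{0..<1}|lebesgue. (if u < s then a else b)) = s * a + (1 - s) * b"
proof -
  have eq: "(\<lambda>u. indicator {0..<1} u *\<^sub>R (if u < s then a else b)) =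
        (\<lambda>u. a * indicator {0..<s} u + b * indicator {s..<1::real} u)"
    using assms by (auto simp: indicator_def fun_eq_iff)
  have ea: "emeasure lebesgue {0..<s} < \<infinity>" using assms by simp
  have ia: "integrable lebesgue (\<lambda>u. a * indicator {0..<s} u)" using ea by (intro integrable_mult_right integrable_real_indicator) auto
  have eb: "emeasure lebesgue {s..<1} < \<infinity>" using assms by simp
  have ib: "integrable lebesgue (\<lambda>u. b * indicator {s..<1::real} u)" using eb by (intro integrable_mult_right integrable_real_indicator) auto
  have i: "integrable lebesgue (\<lambda>u. a * indicator {0..<s} u + b * indicator {s..<1::real} u)"
    by (rule Bochner_Integration.integrable_add[OF ia ib])
  then show "set_integrable lebesgue {0..<1} (\<lambda>u. if u < s then a else b)"
    unfolding set_integrable_def eq .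
  have "integral\<^sup>L lebesgue (\<lambda>u. a * indicator {0..<s} u + b * indicator {s..<1::real} u)
      = s * a + (1 - s) * b"
    using assms ea eb by (simp add: Bochner_Integration.integral_add[OF ia ib])
  then show "(LINT u:{0..<1}|lebesgue. (if u < s then a else b)) = s * a + (1 - s) * b"
    unfolding set_lebesgue_integral_def eq .
qed


lemma dual_crit:
  assumes pL: "L2_01 p" and pb: "\<And>u. u \<in> {0..<1} \<Longrightarrow> \<bar>p u\<bar> \<le> B"
    and t: "t \<in> {0..<1}"
    and neg: "\<And>u. u \<in> {0..<1} \<Longrightarrow> u < t \<Longrightarrow> p u \<le> 0"
    and pos: "\<And>u. u \<in> {0..<1} \<Longrightarrow> t \<le> u \<Longrightarrow> 0 \<le> p u"
    and int: "0 \<le> (LINT u:{0..<1}|lebesgue. p u)"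
  shows "p \<in> Q2_dual"
proof -
  have B0: "0 \<le> B" using pb[OF t] by linarith
  have "0 \<le> L2_inner p r" if r: "r \<in> Q2" for r
  proof -
    from r have r0: "\<forall>u\<in>{0..<1}. 0 \<le> r u" and rm: "mono_on {0..<1} r" and rL: "L2_01 r"
      unfolding Q2_def by auto
    have ri: "set_integrable lebesgue {0..<1} r" by (rule L2_integrable[OF rL])
    have pi: "set_integrable lebesgue {0..<1} p" by (rule L2_integrable[OF pL])
    have Bri: "set_integrable lebesgue {0..<1} (\<lambda>u. B * r u)" using ri by simp
    have pri: "set_integrable lebesgue {0..<1} (\<lambda>u. p u * r u)"
    proof (rule set_integrable_bound[OF Bri])
      show "set_borel_measurable lebesgue {0..<1} (\<lambda>u. p u * r u)"
        using pL rL unfolding L2_01_def by (intro sbm_mult) auto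
      show "AE x\<in>{0..<1} in lebesgue. norm (p x * r x) \<le> norm (B * r x)"
      proof (rule AE_I2, rule impI)
        fix x :: real assume x: "x \<in> {0..<1}"
        have "\<bar>p x\<bar> * r x \<le> B * r x" using pb[OF x] r0 x by (intro mult_right_mono) auto
        then show "norm (p x * r x) \<le> norm (B * r x)" using r0 x B0 by (simp add: abs_mult)
      qed
    qed
    have tri: "set_integrable lebesgue {0..<1} (\<lambda>u. r t * p u)" using pi by simp
    have "(LINT u:{0..<1}|lebesgue. r t * p u) \<le> (LINT u:{0..<1}|lebesgue. p u * r u)"
    proof (rule set_integral_mono[OF tri pri])
      fix u :: real assume u: "u \<in> {0..<1}"
      show "r t * p u \<le> p u * r u"
      proof (cases "u < t")
        case True
        then have "r u \<le> r t" using mono_onD[OF rm u t] by simp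
        moreover have "p u \<le> 0" using neg[OF u True] .
        ultimately have "0 \<le> p u * (r u - r t)" by (intro mult_nonpos_nonpos) auto
        then show ?thesis by (simp add: algebra_simps)
      next
        case False
        then have "r t \<le> r u" using mono_onD[OF rm t u] by simp
        moreover have "0 \<le> p u" using pos[OF u] False by simp
        ultimately have "0 \<le> p u * (r u - r t)" by (intro mult_nonneg_nonneg) auto
        then show ?thesis by (simp add: algebra_simps)
      qed
    qed
    moreover have "0 \<le> r t * (LINT u:{0..<1}|lebesgue. p u)" using r0 t int by simp
    ultimately show ?thesis unfolding L2_inner_def by simp
  qed
  then show ?thesis unfolding Q2_dual_def using pL by auto
qed

lemma cont_shift:
  fixes chi :: "real \<Rightarrow> real" and c :: real
  assumes "continuous_on {0..} chi" "0 \<le> c"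
  shows "continuous_on UNIV (\<lambda>x. chi (max 0 x + c))"
proof (rule continuous_on_compose2[OF assms(1)])
  show "continuous_on UNIV (\<lambda>x::real. max 0 x + c)" by (intro continuous_intros)
  show "(\<lambda>x::real. max 0 x + c) ` UNIV \<subseteq> {0..}" using assms(2) by auto
qed

lemma chi_int:
  fixes chi :: "real \<Rightarrow> real"
  assumes L: "L-lipschitz_on {0..} chi" and q: "q \<in> Q2"
  shows "set_integrable lebesgue {0..<1} (\<lambda>u. chi (q u))"
proof -
  from q have q0: "\<forall>u\<in>{0..<1}. 0 \<le> q u" and qL: "L2_01 q" unfolding Q2_def by auto
  have qi: "set_integrable lebesgue {0..<1} q" by (rule L2_integrable[OF qL])
  have bi: "set_integrable lebesgue {0..<1} (\<lambda>u. \<bar>chi 0\<bar> + L * q u)"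
    using si_const qi by (intro set_integral_add(1)) auto
  have cc: "continuous_on UNIV (\<lambda>x. chi (max 0 x + 0))"
    by (rule cont_shift[OF lipschitz_on_continuous_on[OF L]]) simp
  have qm: "set_borel_measurable lebesgue {0..<1} q" using qL unfolding L2_01_def by simp
  show ?thesis
  proof (rule set_integrable_bound[OF bi])
    show "set_borel_measurable lebesgue {0..<1} (\<lambda>u. chi (q u))"
      by (rule sbm_cong[OF sbm_comp[OF qm A_sets cc]]) (use q0 in auto)
    show "AE x\<in>{0..<1} in lebesgue. norm (chi (q x)) \<le> norm (\<bar>chi 0\<bar> + L * q x)"
    proof (rule AE_I2, rule impI)
      fix x :: real assume x: "x \<in> {0..<1}"
      have "dist (chi (q x)) (chi 0) \<le> L * dist (q x) 0"
        by (rule lipschitz_onD[OF L]) (use q0 x in auto)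
      moreover have "0 \<le> L" using lipschitz_on_nonneg[OF L] .
      ultimately show "norm (chi (q x)) \<le> norm (\<bar>chi 0\<bar> + L * q x)"
        using q0 x by (simp add: dist_real_def)
    qed
  qed
qed

lemma swap_div: "(a - b) / (c - d) = (b - a) / (d - (c::real))"
  by (metis minus_diff_eq minus_divide_divide)

lemma slope3:
  fixes f :: "real \<Rightarrow> real"
  assumes f: "convex_on {0..} f" and "0 \<le> x" "x < y" "y < (z::real)"
  shows "(f y - f x) / (y - x) \<le> (f z - f x) / (z - x)"
    and "(f z - f x) / (z - x) \<le> (f z - f y) / (z - y)"
  using convex_on_slope_le[OF f, of x z y] assms by (auto simp: swap_div)


lemma dir2:
  fixes chi :: "real \<Rightarrow> real"
  assumes L: "L-lipschitz_on {0..} chi" and mo: "mono_on {0..} chi" and cvx: "convex_on {0..} chi"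
  shows "Q2_dual_nondecreasing (\<lambda>q. LINT u:{0..<1}|lebesgue. chi (q u))"
  unfolding Q2_dual_nondecreasing_def
proof (intro ballI impI)
  fix q q' assume q: "q \<in> Q2" and q': "q' \<in> Q2" and p: "(\<lambda>u. q' u - q u) \<in> Q2_dual"
  have L0: "0 \<le> L" using lipschitz_on_nonneg[OF L] .
  have cc: "continuous_on {0..} chi" by (rule lipschitz_on_continuous_on[OF L])
  from q have q0: "\<forall>u\<in>{0..<1}. 0 \<le> q u" and qm: "mono_on {0..<1} q"
    and qr: "\<forall>u\<in>{0..<1}. continuous (at_right u) q" and qL: "L2_01 q" unfolding Q2_def by auto
  from q' have q'0: "\<forall>u\<in>{0..<1}. 0 \<le> q' u" and q'L: "L2_01 q'" unfolding Q2_def by auto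
  have pL: "L2_01 (\<lambda>u. q' u - q u)" using p unfolding Q2_dual_def by auto
  have qi: "set_integrable lebesgue {0..<1} q" by (rule L2_integrable[OF qL])
  have q'i: "set_integrable lebesgue {0..<1} q'" by (rule L2_integrable[OF q'L])
  have ci: "set_integrable lebesgue {0..<1} (\<lambda>u. chi (q u))" by (rule chi_int[OF L q])
  have c'i: "set_integrable lebesgue {0..<1} (\<lambda>u. chi (q' u))" by (rule chi_int[OF L q'])
  define D where "D = (LINT u:{0..<1}|lebesgue. chi (q' u)) - (LINT u:{0..<1}|lebesgue. chi (q u))"
  have key: "- L * h \<le> D" if h: "h > 0" for h
  proof -
    define g where "g x = (chi (max 0 x + h) - chi (max 0 x + 0)) / h" for x
    have gc: "continuous_on UNIV g"
      unfolding g_def using cont_shift[OF cc, of h] cont_shift[OF cc, of 0] h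
      by (intro continuous_intros) auto
    have gx: "g x = (chi (x + h) - chi x) / h" if "0 \<le> x" for x
      using that by (simp add: g_def)
    have g0: "0 \<le> g x" "g x \<le> L" if x: "0 \<le> x" for x
    proof -
      have "chi x \<le> chi (x + h)" using mono_onD[OF mo, of x "x + h"] x h by auto
      then show "0 \<le> g x" using h x by (simp add: gx)
      have "dist (chi (x + h)) (chi x) \<le> L * dist (x + h) x"
        by (rule lipschitz_onD[OF L]) (use x h in auto)
      then have "chi (x + h) - chi x \<le> L * h" using h by (simp add: dist_real_def)
      then show "g x \<le> L" using h x by (simp add: gx pos_divide_le_eq)
    qed
    have gm: "g x \<le> g y" if xy: "0 \<le> x" "x \<le> y" for x y
    proof (cases "x = y")
      case False
      then have "x < y" using xy by simp
      have "(chi (x + h) - chi x) / (x + h - x) \<le> (chi (y + h) - chi x) / (y + h - x)"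
        using slope3(1)[OF cvx, of x "x + h" "y + h"] xy h \<open>x < y\<close> by simp
      also have "\<dots> \<le> (chi (y + h) - chi y) / (y + h - y)"
        using slope3(2)[OF cvx, of x y "y + h"] xy h \<open>x < y\<close> by simp
      finally show ?thesis using xy by (simp add: gx)
    qed simp
    have Lh: "0 \<le> L * h" using L0 h by simp
    have gk: "g x * (y - x) - L * h \<le> chi y - chi x" if xy: "0 \<le> x" "0 \<le> y" for x y
    proof -
      consider "x + h < y" | "y = x + h" | "y < x" | "x \<le> y" "y < x + h" by linarith
      then show ?thesis
      proof cases
        case 1
        have "(chi (x + h) - chi x) / (x + h - x) \<le> (chi y - chi x) / (y - x)"
          using slope3(1)[OF cvx, of x "x + h" y] xy h 1 by simp
        then have "g x \<le> (chi y - chi x) / (y - x)" using xy by (simp add: gx)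
        then have "g x * (y - x) \<le> chi y - chi x" using 1 h by (simp add: pos_le_divide_eq)
        then show ?thesis using Lh by linarith
      next
        case 2
        then have "g x * (y - x) = chi y - chi x" using h xy by (simp add: gx)
        then show ?thesis using Lh by linarith
      next
        case 3
        have "(chi x - chi y) / (x - y) \<le> (chi (x + h) - chi y) / (x + h - y)"
          using slope3(1)[OF cvx, of y x "x + h"] xy h 3 by simp
        also have "\<dots> \<le> (chi (x + h) - chi x) / (x + h - x)"
          using slope3(2)[OF cvx, of y x "x + h"] xy h 3 by simp
        finally have "(chi x - chi y) / (x - y) \<le> g x" using xy by (simp add: gx)
        then have "chi x - chi y \<le> g x * (x - y)" using 3 by (simp add: pos_divide_le_eq)
        then have "g x * (y - x) \<le> chi y - chi x" by (simp add: algebra_simps)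
        then show ?thesis using Lh by linarith
      next
        case 4
        have "chi x \<le> chi y" using mono_onD[OF mo, of x y] xy 4 by auto
        moreover have "g x * (y - x) \<le> L * h"
          using g0[OF xy(1)] 4 L0 by (intro mult_mono) auto
        ultimately show ?thesis by simp
      qed
    qed
    define r where "r u = g (q u)" for u
    have rm: "set_borel_measurable lebesgue {0..<1} r"
      unfolding r_def using qL unfolding L2_01_def by (intro sbm_comp[OF _ A_sets gc]) auto
    have rQ: "r \<in> Q2"
      unfolding Q2_def
    proof (intro CollectI conjI ballI)
      fix u :: real assume u: "u \<in> {0..<1}"
      show "0 \<le> r u" unfolding r_def using g0 q0 u by auto
      have "isCont g (q u)" using gc by (simp add: continuous_on_eq_continuous_at)
      moreover have "continuous (at_right u) q" using qr u by blast
      ultimately show "continuous (at_right u) r"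
        unfolding r_def by (rule continuous_within_compose3)
    next
      show "mono_on {0..<1} r"
      proof (rule mono_onI)
        fix a b :: real assume ab: "a \<in> {0..<1}" "b \<in> {0..<1}" "a \<le> b"
        have "q a \<le> q b" using mono_onD[OF qm ab] .
        moreover have "0 \<le> q a" using q0 ab(1) by blast
        ultimately show "r a \<le> r b" unfolding r_def by (rule gm[rotated])
      qed
    next
      show "L2_01 r"
        by (rule L2_bounded[OF rm, of L]) (use g0 q0 in \<open>auto simp: r_def\<close>)
    qed
    then have inner: "0 \<le> L2_inner (\<lambda>u. q' u - q u) r" using p unfolding Q2_dual_def by auto
    have Lqi: "set_integrable lebesgue {0..<1} (\<lambda>u. L * (q' u + q u))"
      using qi q'i by (intro set_integrable_mult_right set_integral_add(1)) auto
    have pri: "set_integrable lebesgue {0..<1} (\<lambda>u. (q' u - q u) * r u)"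
    proof (rule set_integrable_bound[OF Lqi])
      show "set_borel_measurable lebesgue {0..<1} (\<lambda>u. (q' u - q u) * r u)"
        using pL rm unfolding L2_01_def by (intro sbm_mult) auto
      show "AE x\<in>{0..<1} in lebesgue. norm ((q' x - q x) * r x) \<le> norm (L * (q' x + q x))"
      proof (rule AE_I2, rule impI)
        fix x :: real assume x: "x \<in> {0..<1}"
        have r0: "0 \<le> r x" "r x \<le> L" unfolding r_def using g0 q0 x by auto
        have "0 \<le> q x" "0 \<le> q' x" using q0 q'0 x by auto
        then have "\<bar>q' x - q x\<bar> \<le> q' x + q x" by linarith
        then have "\<bar>q' x - q x\<bar> * r x \<le> (q' x + q x) * L"
          using q0 q'0 x r0 by (intro mult_mono) auto
        moreover have "norm ((q' x - q x) * r x) = \<bar>q' x - q x\<bar> * r x"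
          using r0 by (simp add: abs_mult)
        moreover have "norm (L * (q' x + q x)) = (q' x + q x) * L"
          using L0 \<open>0 \<le> q x\<close> \<open>0 \<le> q' x\<close> by (simp add: abs_mult)
        ultimately show "norm ((q' x - q x) * r x) \<le> norm (L * (q' x + q x))" by simp
      qed
    qed
    have i1: "set_integrable lebesgue {0..<1} (\<lambda>u. (q' u - q u) * r u - L * h)"
      using pri si_const by (intro set_integral_diff(1)) auto
    have i2: "set_integrable lebesgue {0..<1} (\<lambda>u. chi (q' u) - chi (q u))"
      using ci c'i by (intro set_integral_diff(1)) auto
    have "(LINT u:{0..<1}|lebesgue. (q' u - q u) * r u - L * h)
        \<le> (LINT u:{0..<1}|lebesgue. chi (q' u) - chi (q u))"
    proof (rule set_integral_mono[OF i1 i2])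
      fix u :: real assume u: "u \<in> {0..<1}"
      show "(q' u - q u) * r u - L * h \<le> chi (q' u) - chi (q u)"
        using gk[of "q u" "q' u"] q0 q'0 u unfolding r_def by (simp add: mult.commute)
    qed
    also have "\<dots> = D" unfolding D_def by (rule set_integral_diff(2)[OF c'i ci])
    finally have "(LINT u:{0..<1}|lebesgue. (q' u - q u) * r u - L * h) \<le> D" .
    moreover have "(LINT u:{0..<1}|lebesgue. (q' u - q u) * r u - L * h)
        = L2_inner (\<lambda>u. q' u - q u) r - L * h"
      unfolding L2_inner_def using set_integral_diff(2)[OF pri si_const[of "L * h"]] int_const by simp
    ultimately show ?thesis using inner by simp
  qed
  have "0 \<le> D"
  proof (rule ccontr)
    assume "\<not> 0 \<le> D"
    then have D: "D < 0" by simp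
    define h where "h = - D / (L + 1)"
    have hp: "h > 0" using D L0 unfolding h_def by (intro divide_pos_pos) auto
    have "- L * h \<le> D" by (rule key[OF hp])
    then have "- L * h * (L + 1) \<le> D * (L + 1)" using L0 by (intro mult_right_mono) auto
    moreover have hL: "h * (L + 1) = - D" using L0 by (simp add: h_def)
    moreover have "- L * h * (L + 1) = L * D"
    proof -
      have "- L * h * (L + 1) = - L * (h * (L + 1))" by (simp add: mult.assoc)
      also have "\<dots> = L * D" using hL by simp
      finally show ?thesis .
    qed
    ultimately have "L * D \<le> D * (L + 1)" by simp
    then show False using D by (simp add: algebra_simps)
  qed
  then show "(LINT u:{0..<1}|lebesgue. chi (q u)) \<le> (LINT u:{0..<1}|lebesgue. chi (q' u))"
    unfolding D_def by simp
qed


lemma const_Q2: "0 \<le> (c::real) \<Longrightarrow> (\<lambda>u. c) \<in> Q2"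
  unfolding Q2_def
proof (intro CollectI conjI ballI)
  show "L2_01 (\<lambda>u. c)"
    by (rule L2_bounded[of _ "\<bar>c\<bar>"]) (auto intro: sbm_global)
qed (auto intro: mono_onI)

lemma step_meas: "(\<lambda>u::real. if u < s then a else (b::real)) \<in> borel_measurable lebesgue"
proof -
  have eq: "(\<lambda>u::real. if u < s then a else (b::real)) = (\<lambda>u. a * indicator {..<s} u + b * indicator {s..} u)"
    by (auto simp: fun_eq_iff indicator_def)
  show ?thesis unfolding eq
    by (intro borel_measurable_add borel_measurable_times borel_measurable_const borel_measurable_indicator) auto
qed

lemma step_Q2:
  assumes "0 \<le> a" "a \<le> b"
  shows "(\<lambda>u::real. if u < s then a else b) \<in> Q2"
  unfolding Q2_def
proof (intro CollectI conjI ballI)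
  fix u :: real assume u: "u \<in> {0..<1}"
  show "0 \<le> (if u < s then a else b)" using assms by auto
  show "continuous (at_right u) (\<lambda>u::real. if u < s then a else b)"
    unfolding continuous_within
  proof (cases "u < s")
    case True
    have "eventually (\<lambda>v. v < s) (at_right u)"
      unfolding eventually_at_right[OF True] using True by auto
    then have "eventually (\<lambda>v. (if v < s then a else b) = a) (at_right u)"
      by (rule eventually_mono) auto
    then show "((\<lambda>u. if u < s then a else b) \<longlongrightarrow> (if u < s then a else b)) (at_right u)"
      using True by (simp add: tendsto_eventually)
  next
    case False
    have "eventually (\<lambda>v. u < v) (at_right u)" by (rule eventually_at_right_less)
    then have "eventually (\<lambda>v. (if v < s then a else b) = b) (at_right u)"
      by (rule eventually_mono) (use False in auto)
    then show "((\<lambda>u. if u < s then a else b) \<longlongrightarrow> (if u < s then a else b)) (at_right u)"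
      using False by (simp add: tendsto_eventually)
  qed
next
  show "mono_on {0..<1} (\<lambda>u::real. if u < s then a else b)"
    by (rule mono_onI) (use assms in auto)
  show "L2_01 (\<lambda>u::real. if u < s then a else b)"
    by (rule L2_bounded[of _ b]) (use assms step_meas in \<open>auto intro: sbm_global\<close>)
qed

lemma dir1:
  fixes chi :: "real \<Rightarrow> real"
  assumes L: "L-lipschitz_on {0..} chi"
    and nd: "Q2_dual_nondecreasing (\<lambda>q. LINT u:{0..<1}|lebesgue. chi (q u))"
  shows "mono_on {0..} chi \<and> convex_on {0..} chi"
proof
  have ND: "(LINT u:{0..<1}|lebesgue. chi (q u)) \<le> (LINT u:{0..<1}|lebesgue. chi (q' u))"
    if "q \<in> Q2" "q' \<in> Q2" "(\<lambda>u. q' u - q u) \<in> Q2_dual" for q q'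
    using nd that unfolding Q2_dual_nondecreasing_def by blast
  show "mono_on {0..} chi"
  proof (rule mono_onI)
    fix x y :: real assume xy: "x \<in> {0..}" "y \<in> {0..}" "x \<le> y"
    have "(\<lambda>u::real. y - x) \<in> Q2_dual"
    proof (rule dual_crit[of _ "y - x" 0])
      show "L2_01 (\<lambda>u::real. y - x)"
        by (rule L2_bounded[of _ "\<bar>y - x\<bar>"]) (auto intro: sbm_global)
      have "(LINT u:{0..<1::real}|lebesgue. y - x) = y - x" by (rule int_const)
      then show "0 \<le> (LINT u:{0..<1::real}|lebesgue. y - x)" using xy by linarith
    qed (use xy in auto)
    then have "(LINT u:{0..<1::real}|lebesgue. chi x) \<le> (LINT u:{0..<1::real}|lebesgue. chi y)"
      using ND[of "\<lambda>u. x" "\<lambda>u. y"] const_Q2 xy by auto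
    then show "chi x \<le> chi y" by (simp only: int_const)
  qed
  show "convex_on {0..} chi"
  proof (rule convex_on_linorderI)
    show "convex {0::real..}" by (rule convex_real_interval)
    fix t x y :: real assume t: "0 < t" "t < 1" and xy: "x \<in> {0..}" "y \<in> {0..}" "x < y"
    define s where "s = 1 - t"
    define c where "c = (1 - t) * x + t * y"
    have c0: "0 \<le> c" using t xy by (simp add: c_def)
    have s01: "0 \<le> s" "s \<le> 1" "s \<in> {0..<1}" using t by (auto simp: s_def)
    have stepQ: "(\<lambda>u::real. if u < s then x else y) \<in> Q2" using xy by (intro step_Q2) auto
    have pint: "(LINT u:{0..<1::real}|lebesgue. (if u < s then x else y) - c) = 0"
    proof -
      have "(LINT u:{0..<1::real}|lebesgue. (if u < s then x else y) - c)
          = (LINT u:{0..<1::real}|lebesgue. (if u < s then x else y)) - (LINT u:{0..<1::real}|lebesgue. c)"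
        by (rule set_integral_diff(2)[OF step_int(1)[OF s01(1,2)] si_const])
      also have "\<dots> = (s * x + (1 - s) * y) - c"
        by (simp only: step_int(2)[OF s01(1,2)] int_const)
      also have "\<dots> = 0" by (simp add: c_def s_def algebra_simps)
      finally show ?thesis .
    qed
    have "(\<lambda>u::real. (if u < s then x else y) - c) \<in> Q2_dual"
    proof (rule dual_crit[of _ "\<bar>x\<bar> + \<bar>y\<bar> + \<bar>c\<bar>" s])
      show "L2_01 (\<lambda>u::real. (if u < s then x else y) - c)"
        by (rule L2_bounded[of _ "\<bar>x\<bar> + \<bar>y\<bar> + \<bar>c\<bar>"])
          (auto intro!: sbm_global borel_measurable_diff step_meas)
      show "s \<in> {0..<1}" by (rule s01(3))
      show "0 \<le> (LINT u:{0..<1}|lebesgue. (if u < s then x else y) - c)" using pint by simp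
      fix u :: real
      show "u < s \<Longrightarrow> (if u < s then x else y) - c \<le> 0"
      proof -
        assume "u < s"
        have "x - c = t * (x - y)" by (simp add: c_def algebra_simps)
        also have "\<dots> \<le> 0" using t xy by (intro mult_nonneg_nonpos) auto
        finally show ?thesis using \<open>u < s\<close> by simp
      qed
      show "s \<le> u \<Longrightarrow> 0 \<le> (if u < s then x else y) - c"
      proof -
        assume "s \<le> u"
        have "y - c = (1 - t) * (y - x)" by (simp add: c_def algebra_simps)
        also have "\<dots> \<ge> 0" using t xy by (intro mult_nonneg_nonneg) auto
        finally show ?thesis using \<open>s \<le> u\<close> by simp
      qed
    qed auto
    then have "(LINT u:{0..<1::real}|lebesgue. chi c) \<le> (LINT u:{0..<1}|lebesgue. chi (if u < s then x else y))"
      using ND[of "\<lambda>u. c" "\<lambda>u. if u < s then x else y"] const_Q2[OF c0] stepQ by auto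
    also have "(\<lambda>u. chi (if u < s then x else y)) = (\<lambda>u. if u < s then chi x else chi y)"
      by (auto simp: fun_eq_iff)
    also have "(LINT u:{0..<1}|lebesgue. (if u < s then chi x else chi y)) = s * chi x + (1 - s) * chi y"
      by (rule step_int(2)[OF s01(1,2)])
    finally show "chi ((1 - t) *\<^sub>R x + t *\<^sub>R y) \<le> (1 - t) * chi x + t * chi y"
      by (simp only: int_const) (simp add: c_def s_def)
  qed
qed

theorem proposition4p4:
  fixes chi :: "real \<Rightarrow> real"
  assumes "\<exists>L. L-lipschitz_on {0..} chi"
  shows "Q2_dual_nondecreasing (\<lambda>q. LINT u:{0..<1}|lebesgue. chi (q u))
         \<longleftrightarrow> (mono_on {0..} chi \<and> convex_on {0..} chi)"
proof -
  obtain L where L: "L-lipschitz_on {0..} chi" using assms by blast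
  show ?thesis using dir1[OF L] dir2[OF L] by blast
qed

end
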